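(* Let $n\ge 3$, $1<k<n/2$ and $p_{se}:=\frac{nk}{n-2k}<p<p_{so}:=\frac{(n+2)k}{n-2k}$. Then problem (1.6) has no regular solution.
   Context: Here $C_{n-1}^{k-1}$ denotes the binomial coefficient. Problem (1.6) is: given $\rho>0$, find $u$ with $$-\tfrac{1}{k}C_{n-1}^{k-1}\big(r^{n-k}|u'|^{k-1}u'\big)'=r^{n-1}u^{p},\quad u(r)>0 \text{ for all } r>0,\qquad u'(0)=0,\ u(0)=\rho .$$ A solution $u$ of (1.6) is called regular if the function $x\mapsto u(|x|)$ belongs to $C^2(\mathbb{R}^n)$. *)

theory Defs
  imports "HOL-Analysis.Analysis"
begin

definition C2_UNIV :: "('a::euclidean_space \<Rightarrow> real) \<Rightarrow> bool" where
  "C2_UNIV f \<longleftrightarrow> (\<exists>(f' :: 'a \<Rightarrow> ('a \<Rightarrow>\<^sub>L real)) (f'' :: 'a \<Rightarrow> ('a \<Rightarrow>\<^sub>L ('a \<Rightarrow>\<^sub>L real))).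
      (\<forall>x. (f has_derivative blinfun_apply (f' x)) (at x)) \<and>
      (\<forall>x. (f' has_derivative blinfun_apply (f'' x)) (at x)) \<and>
      continuous_on UNIV f'')"

text \<open>u solves problem (1.6) with parameters n, k, p and initial value rho
  (u is considered on [0,\<infinity>); its values at negative arguments are irrelevant).\<close>
definition solves_problem_1_6 :: "nat \<Rightarrow> nat \<Rightarrow> real \<Rightarrow> real \<Rightarrow> (real \<Rightarrow> real) \<Rightarrow> bool" where
  "solves_problem_1_6 n k p \<rho> u \<longleftrightarrow>
     (\<forall>r>0. u r > 0) \<and> u 0 = \<rho> \<and>
     (u has_real_derivative 0) (at 0 within {0..}) \<and>
     (\<forall>r>0. u differentiable (at r)) \<and>
     (\<forall>r>0. \<exists>D. ((\<lambda>s. s ^ (n - k) * \<bar>deriv u s\<bar> ^ (k - 1) * deriv u s) has_real_derivative D) (at r)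
               \<and> - (1 / real k) * real ((n - 1) choose (k - 1)) * D = r ^ (n - 1) * u r powr p)"

text \<open>Regular solution: x \<mapsto> u(|x|) is C^2 on R^n (here R^n = real^'n with CARD('n) = n).\<close>
definition regular_solution_1_6 :: "'n::finite itself \<Rightarrow> nat \<Rightarrow> nat \<Rightarrow> real \<Rightarrow> real \<Rightarrow> (real \<Rightarrow> real) \<Rightarrow> bool" where
  "regular_solution_1_6 _ n k p \<rho> u \<longleftrightarrow>
     solves_problem_1_6 n k p \<rho> u \<and> C2_UNIV (\<lambda>x :: real ^ 'n. u (norm x))"

end

theory Submission imports Defs begin

lemma lim_le_of_mono:
  fixes h :: "real \<Rightarrow> real"
  assumes "r > 0" "\<And>s. 0 < s \<Longrightarrow> s < r \<Longrightarrow> h s \<le> h r" "(h \<longlongrightarrow> L) (at_right 0)"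
  shows "L \<le> h r"
proof (rule tendsto_le[OF _ tendsto_const assms(3)])
  show "at_right (0::real) \<noteq> bot" by simp
  show "\<forall>\<^sub>F x in at_right 0. h x \<le> h r"
    unfolding eventually_at_right_field using assms by (intro exI[of _ r]) auto
qed

lemma lim_ge_of_mono:
  fixes h :: "real \<Rightarrow> real"
  assumes "r > 0" "\<And>s. 0 < s \<Longrightarrow> s < r \<Longrightarrow> h r \<le> h s" "(h \<longlongrightarrow> L) (at_right 0)"
  shows "h r \<le> L"
proof (rule tendsto_le[OF _ assms(3) tendsto_const])
  show "at_right (0::real) \<noteq> bot" by simp
  show "\<forall>\<^sub>F x in at_right 0. h r \<le> h x"
    unfolding eventually_at_right_field using assms by (intro exI[of _ r]) auto
qed

lemma no_slope_at0:
  fixes f g :: "real \<Rightarrow> real"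
  assumes d0: "(f has_real_derivative 0) (at 0 within {0..})"
    and r1: "r1 > 0" and m: "m > 0"
    and dg: "\<And>s. 0 < s \<Longrightarrow> s \<le> r1 \<Longrightarrow> (f has_real_derivative g s) (at s) \<and> g s \<ge> m"
  shows False
proof -
  have lim: "((\<lambda>y. (f y - f 0) / (y - 0)) \<longlongrightarrow> 0) (at 0 within {0..})"
    using d0 has_field_derivative_iff by blast
  have lim2: "((\<lambda>y. (f y - f 0) / y) \<longlongrightarrow> 0) (at_right 0)"
  proof -
    have "((\<lambda>y. (f y - f 0) / (y - 0)) \<longlongrightarrow> 0) (at 0 within {0<..})"
      by (rule tendsto_within_subset[OF lim]) auto
    then show ?thesis by simp
  qed
  have cont: "(f \<longlongrightarrow> f 0) (at_right 0)"
  proof -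
    have "continuous (at 0 within {0..}) f"
      using d0 by (simp add: DERIV_continuous)
    then have "(f \<longlongrightarrow> f 0) (at 0 within {0..})" by (simp add: continuous_within)
    then show ?thesis by (rule tendsto_within_subset) auto
  qed
  have ev: "\<forall>\<^sub>F y in at_right 0. (f y - f 0) / y < m"
    using order_tendstoD(2)[OF lim2 m] .
  have ev2: "\<forall>\<^sub>F y in at_right 0. y < r1"
    unfolding eventually_at_right_field using r1 by auto
  have "\<forall>\<^sub>F y in at_right (0::real). y > 0" by (simp add: eventually_at_right_less)
  from eventually_conj[OF ev eventually_conj[OF ev2 this]] obtain s where
    s: "(f s - f 0) / s < m" "s < r1" "s > 0"
    using eventually_happens[of _ "at_right (0::real)"] by force
  have limh: "((\<lambda>t. f t - m * t) \<longlongrightarrow> f 0 - m * 0) (at_right 0)"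
    by (intro tendsto_intros cont)
  have mon: "f t - m * t \<le> f s - m * s" if t: "0 < t" "t < s" for t
  proof (rule DERIV_nonneg_imp_nondecreasing[where f="\<lambda>t. f t - m * t"])
    show "t \<le> s" using t by simp
    fix x assume x: "t \<le> x" "x \<le> s"
    then have "(f has_real_derivative g x) (at x) \<and> g x \<ge> m" using dg t s by auto
    then show "\<exists>y. ((\<lambda>t. f t - m * t) has_real_derivative y) (at x) \<and> 0 \<le> y"
      by (intro exI[of _ "g x - m"]) (auto intro!: derivative_eq_intros)
  qed
  have key: "f 0 \<le> f s - m * s"
    using lim_le_of_mono[where h="\<lambda>t. f t - m * t", OF s(3) _ limh] mon by simp
  then have "m \<le> (f s - f 0) / s" using s by (simp add: field_simps)
  with s show False by simp
qed

lemma pow_ge_min: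
  fixes x M :: real
  assumes "x > 0" "k \<ge> 1" "x ^ k \<ge> M"
  shows "x \<ge> min 1 M"
proof (cases "x \<ge> 1")
  case True then show ?thesis by simp
next
  case False
  then have "x ^ k \<le> x ^ 1" using assms by (intro power_decreasing) auto
  then show ?thesis using assms by simp
qed

lemma lin_aux: "(A::real) - R = - H \<Longrightarrow> A + (N - R) - (G - H) = N - G" by simp

lemma alg:
  fixes r b ww uu U q c k n p :: real
  assumes "r > 0" "b > 0" "c > 0" "k > 0" "p + 1 > 0"
  shows "k * c / (k + 1) * (b * ww + r * (q * U / c) * ww + r * b * (ww * ((q * U / c / b - (n - k) / r) / k)))
    + (n * q * (uu * U) + r * q * ((p + 1) * U * (- ww))) / (p + 1)
    - c * (n - 2 * k) / (k + 1) * (q * U / c * uu + b * (- ww))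
    = (n / (p + 1) - (n - 2 * k) / (k + 1)) * q * (uu * U)"
proof -
  have nz: "k + 1 \<noteq> 0" "p + 1 \<noteq> 0" "c \<noteq> 0" "b \<noteq> 0" "r \<noteq> 0" "k \<noteq> 0" using assms by auto
  have e1: "r * b * (ww * ((q * U / c / b - (n - k) / r) / k)) = (r * q * U * ww / c - (n - k) * b * ww) / k"
    using nz by (simp add: field_simps)
  have e2: "(n * q * (uu * U) + r * q * ((p + 1) * U * (- ww))) / (p + 1) = n * q * uu * U / (p + 1) - r * q * U * ww"
    using nz by (simp add: field_simps)
  have e3a: "k * c * (b * ww + r * (q * U / c) * ww + (r * q * U * ww / c - (n - k) * b * ww) / k)
     = (k * c * b * ww + k * r * q * U * ww + r * q * U * ww - c * (n - k) * b * ww)"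
    using nz by (simp add: field_simps)
  have e3: "k * c / (k + 1) * (b * ww + r * (q * U / c) * ww + (r * q * U * ww / c - (n - k) * b * ww) / k)
     = (k * c * b * ww + k * r * q * U * ww + r * q * U * ww - c * (n - k) * b * ww) / (k + 1)"
    unfolding e3a[symmetric] by simp
  have e4a: "c * (q * U / c * uu + b * (- ww)) = q * U * uu - c * b * ww"
    using nz by (simp add: field_simps)
  have e4: "c * (n - 2 * k) / (k + 1) * (q * U / c * uu + b * (- ww)) = ((n - 2 * k) * q * U * uu - c * (n - 2 * k) * b * ww) / (k + 1)"
  proof -
    have "c * (n - 2 * k) / (k + 1) * (q * U / c * uu + b * (- ww)) = (n - 2 * k) * (c * (q * U / c * uu + b * (- ww))) / (k + 1)"
      by simp
    also have "\<dots> = ((n - 2 * k) * q * U * uu - c * (n - 2 * k) * b * ww) / (k + 1)"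
      unfolding e4a by (simp add: algebra_simps)
    finally show ?thesis .
  qed
  have e5: "(n / (p + 1) - (n - 2 * k) / (k + 1)) * q * (uu * U) = n * q * uu * U / (p + 1) - (n - 2 * k) * q * U * uu / (k + 1)"
    using nz by (simp add: field_simps)
  have e6: "(k * c * b * ww + k * r * q * U * ww + r * q * U * ww - c * (n - k) * b * ww) / (k + 1) - r * q * U * ww
      = - ((c * (n - 2 * k) * b * ww) / (k + 1))"
    using nz by (simp add: field_simps)
  have e7: "((n - 2 * k) * q * U * uu - c * (n - 2 * k) * b * ww) / (k + 1)
     = (n - 2 * k) * q * U * uu / (k + 1) - (c * (n - 2 * k) * b * ww) / (k + 1)"
    by (simp add: diff_divide_distrib)
  show ?thesis unfolding e3[folded e1] e2 e4 e5 e7 using e6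
    by (rule lin_aux)
qed

locale sol =
  fixes n k :: nat and p \<rho> c :: real and u B :: "real \<Rightarrow> real"
  assumes k2: "2 \<le> k" and nk: "2 * k < n"
    and pse: "real n * real k < p * (real n - 2 * real k)"
    and pso: "p * (real n - 2 * real k) < (real n + 2) * real k"
    and rho: "\<rho> > 0" and c: "c > 0"
    and upos: "\<And>r. r > 0 \<Longrightarrow> u r > 0" and u0: "u 0 = \<rho>"
    and d0: "(u has_real_derivative 0) (at 0 within {0..})"
    and udiff: "\<And>r. r > 0 \<Longrightarrow> u differentiable (at r)"
    and B_def: "B = (\<lambda>s. - (s ^ (n - k) * \<bar>deriv u s\<bar> ^ (k - 1) * deriv u s))"
    and eq: "\<And>r. r > 0 \<Longrightarrow> \<exists>D. (B has_real_derivative D) (at r) \<and> c * D = r ^ (n - 1) * u r powr p"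
begin

lemma Bder: "r > 0 \<Longrightarrow> (B has_real_derivative r ^ (n - 1) * u r powr p / c) (at r)"
proof -
  assume r: "r > 0"
  obtain D where D: "(B has_real_derivative D) (at r)" "c * D = r ^ (n - 1) * u r powr p"
    using eq[OF r] by blast
  have "D = r ^ (n - 1) * u r powr p / c" using D(2) c by (simp add: field_simps)
  then show ?thesis using D(1) by simp
qed

lemma uder: "r > 0 \<Longrightarrow> (u has_real_derivative deriv u r) (at r)"
  using udiff DERIV_deriv_iff_real_differentiable by blast

lemma Bder_pos: "r > 0 \<Longrightarrow> r ^ (n - 1) * u r powr p / c > 0"
proof -
  assume r: "r > 0"
  then have "u r > 0" using upos by simp
  then show ?thesis using r c by (intro divide_pos_pos mult_pos_pos) auto
qed

lemma Bmono: "0 < s \<Longrightarrow> s < r \<Longrightarrow> B s < B r"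
proof (rule DERIV_pos_imp_increasing[where f=B])
  fix x assume "0 < s" "s \<le> x"
  then have "x > 0" by simp
  then show "\<exists>y. (B has_real_derivative y) (at x) \<and> 0 < y"
    using Bder Bder_pos by blast
qed

lemma Bpos: "r > 0 \<Longrightarrow> B r > 0"
proof (rule ccontr)
  assume r: "r > 0" and "\<not> B r > 0"
  then have Br: "B r \<le> 0" by simp
  define r1 where "r1 = r / 2"
  have r1: "r1 > 0" "r1 < r" using r by (auto simp: r1_def)
  define L where "L = - B r1"
  have L: "L > 0" using Bmono[OF r1] Br by (simp add: L_def)
  define M where "M = L / r1 ^ (n - k)"
  have M: "M > 0" using L r1 by (simp add: M_def)
  show False
  proof (rule no_slope_at0[OF d0 r1(1), of "min 1 M" "deriv u"])
    show "0 < min 1 M" using M by simp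
    fix s assume s: "0 < s" "s \<le> r1"
    have Bs: "B s \<le> - L"
      using s Bmono[of s r1] by (cases "s = r1") (auto simp: L_def)
    define d where "d = deriv u s"
    have pos: "s ^ (n - k) * \<bar>d\<bar> ^ (k - 1) * d \<ge> L"
      using Bs by (simp add: B_def d_def)
    have sp: "s ^ (n - k) > 0" using s by simp
    have "s ^ (n - k) * \<bar>d\<bar> ^ (k - 1) * d > 0" using pos L by linarith
    then have dpos: "d > 0"
    proof (rule contrapos_pp)
      assume "\<not> d > 0"
      then have "d \<le> 0" by simp
      moreover have "s ^ (n - k) * \<bar>d\<bar> ^ (k - 1) \<ge> 0" using sp by simp
      ultimately show "\<not> s ^ (n - k) * \<bar>d\<bar> ^ (k - 1) * d > 0"
        using mult_nonneg_nonpos by (simp add: not_less)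
    qed
    have kk: "k = Suc (k - 1)" using k2 by simp
    have "d ^ k = d ^ (k - 1) * d" by (metis kk power_Suc2)
    then have "\<bar>d\<bar> ^ (k - 1) * d = d ^ k" using dpos by simp
    then have "s ^ (n - k) * d ^ k \<ge> L" using pos by (simp add: mult.assoc)
    moreover have "s ^ (n - k) \<le> r1 ^ (n - k)" using s by (intro power_mono) auto
    ultimately have "r1 ^ (n - k) * d ^ k \<ge> L" using dpos
      by (meson mult_right_mono order_trans zero_le_power less_imp_le)
    then have "d ^ k \<ge> M" using r1 by (simp add: M_def field_simps mult.commute)
    then have "d \<ge> min 1 M" using pow_ge_min[OF dpos, of k] k2 by simp
    then show "(u has_real_derivative deriv u s) (at s) \<and> min 1 M \<le> deriv u s"
      using uder s by (simp add: d_def)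
  qed
qed


lemma Bw: "r > 0 \<Longrightarrow> deriv u r < 0 \<and> B r = r ^ (n - k) * (- deriv u r) ^ k"
proof -
  assume r: "r > 0"
  define d where "d = deriv u r"
  have Br: "B r > 0" using Bpos[OF r] .
  have sp: "r ^ (n - k) * \<bar>d\<bar> ^ (k - 1) \<ge> 0" using r by simp
  have dneg: "d < 0"
  proof (rule ccontr)
    assume "\<not> d < 0"
    then have "d \<ge> 0" by simp
    then have "r ^ (n - k) * \<bar>d\<bar> ^ (k - 1) * d \<ge> 0" using sp by simp
    then show False using Br by (simp add: B_def d_def)
  qed
  have kk: "k = Suc (k - 1)" using k2 by simp
  have "(-d) ^ k = (-d) ^ (k - 1) * (-d)" by (metis kk power_Suc2)
  then have "\<bar>d\<bar> ^ (k - 1) * d = - ((-d) ^ k)" using dneg by simp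
  then have "B r = r ^ (n - k) * (-d) ^ k" by (simp add: B_def d_def[symmetric] mult.assoc)
  then show ?thesis using dneg by (simp add: d_def)
qed

lemma Bsmall: "\<epsilon> > 0 \<Longrightarrow> \<exists>r0>0. B r0 < \<epsilon>"
proof (rule ccontr)
  assume e: "\<epsilon> > 0" and "\<not> (\<exists>r0>0. B r0 < \<epsilon>)"
  then have big: "\<And>r. r > 0 \<Longrightarrow> B r \<ge> \<epsilon>" by force
  have d0': "((\<lambda>x. - u x) has_real_derivative 0) (at 0 within {0..})"
    using DERIV_minus[OF d0] by simp
  show False
  proof (rule no_slope_at0[OF d0' zero_less_one, of "min 1 \<epsilon>" "\<lambda>s. - deriv u s"])
    show "0 < min 1 \<epsilon>" using e by simp
    fix s :: real assume s: "0 < s" "s \<le> 1"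
    define e' where "e' = - deriv u s"
    have ep: "e' > 0" and Bs: "B s = s ^ (n - k) * e' ^ k" using Bw[OF s(1)] by (auto simp: e'_def)
    have "s ^ (n - k) \<le> 1" using s by (simp add: power_le_one)
    then have "s ^ (n - k) * e' ^ k \<le> e' ^ k" using ep
      by (simp add: mult_left_le_one_le)
    then have "e' ^ k \<ge> \<epsilon>" using big[OF s(1)] Bs by simp
    then have "e' \<ge> min 1 \<epsilon>" using pow_ge_min[OF ep, of k] k2 by simp
    then show "((\<lambda>x. - u x) has_real_derivative - deriv u s) (at s) \<and> min 1 \<epsilon> \<le> - deriv u s"
      using DERIV_minus[OF uder[OF s(1)]] by (simp add: e'_def)
  qed
qed

lemma Blim: "(B \<longlongrightarrow> 0) (at_right 0)"
proof (rule order_tendstoI)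
  fix a :: real assume "a < 0"
  then show "\<forall>\<^sub>F x in at_right 0. a < B x"
    unfolding eventually_at_right_field using Bpos
    by (intro exI[of _ 1]) (auto intro: less_trans)
next
  fix a :: real assume "0 < a"
  then obtain r0 where r0: "r0 > 0" "B r0 < a" using Bsmall by blast
  show "\<forall>\<^sub>F x in at_right 0. B x < a"
    unfolding eventually_at_right_field using r0 Bmono
    by (intro exI[of _ r0]) (auto intro: less_trans)
qed

lemma udec: "0 < s \<Longrightarrow> s \<le> r \<Longrightarrow> u r \<le> u s"
proof (rule DERIV_nonpos_imp_nonincreasing[where f=u])
  fix x assume "0 < s" "s \<le> x"
  then have "x > 0" by simp
  then show "\<exists>y. (u has_real_derivative y) (at x) \<and> y \<le> 0"
    using uder Bw by (meson less_imp_le)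
qed

lemma ucont: "(u \<longlongrightarrow> \<rho>) (at_right 0)"
proof -
  have "continuous (at 0 within {0..}) u"
    using d0 by (simp add: DERIV_continuous)
  then have "(u \<longlongrightarrow> u 0) (at 0 within {0..})" by (simp add: continuous_within)
  then have "(u \<longlongrightarrow> u 0) (at_right 0)" by (rule tendsto_within_subset) auto
  then show ?thesis by (simp add: u0)
qed

lemma ule: "r > 0 \<Longrightarrow> u r \<le> \<rho>"
  by (rule lim_ge_of_mono[OF _ _ ucont]) (auto intro: udec)


lemma kpos: "real k > 0" and npos: "real n > 0" and nk_real: "real n - 2 * real k > 0"
  and pk: "p > real k" and ppos: "p > 0"
proof -
  show "real k > 0" using k2 by simp
  show "real n > 0" using nk by simp
  show nk': "real n - 2 * real k > 0" using nk by linarith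
  have "real n * real k > (real n - 2 * real k) * real k" using k2 nk' by (simp add: field_simps)
  then have "p * (real n - 2 * real k) > real k * (real n - 2 * real k)"
    using pse by (simp add: algebra_simps)
  then show "p > real k" using nk' by simp
  then show "p > 0" using k2 by simp
qed

lemma Blower: "r > 0 \<Longrightarrow> u r powr p * (1 / (real n * c)) * r ^ n \<le> B r"
proof -
  assume r: "r > 0"
  define K where "K = u r powr p * (1 / (real n * c))"
  have lim: "((\<lambda>s. B s - K * s ^ n) \<longlongrightarrow> 0 - K * 0 ^ n) (at_right 0)"
    by (intro tendsto_intros Blim)
  have z: "0 - K * 0 ^ n = (0::real)" using nk by simp
  have lim': "((\<lambda>s. B s - K * s ^ n) \<longlongrightarrow> 0) (at_right 0)" using lim unfolding z .
  have "0 \<le> B r - K * r ^ n"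
  proof (rule lim_le_of_mono[OF r _ lim'])
    fix s assume s: "0 < s" "s < r"
    show "B s - K * s ^ n \<le> B r - K * r ^ n"
    proof (rule DERIV_nonneg_imp_nondecreasing[where f="\<lambda>s. B s - K * s ^ n"])
      show "s \<le> r" using s by simp
      fix x assume x: "s \<le> x" "x \<le> r"
      then have xp: "x > 0" using s by simp
      have D: "((\<lambda>s. B s - K * s ^ n) has_real_derivative
               (x ^ (n - 1) * u x powr p / c - K * (real n * x ^ (n - 1)))) (at x)"
        by (auto intro!: derivative_eq_intros Bder[OF xp])
      have "u r \<le> u x" using udec xp x by simp
      then have "u r powr p \<le> u x powr p" using ppos upos[OF r] by (intro powr_mono2) auto
      then have "K * (real n * x ^ (n - 1)) \<le> x ^ (n - 1) * u x powr p / c"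
        using c npos xp by (simp add: K_def field_simps)
      then show "\<exists>y. ((\<lambda>s. B s - K * s ^ n) has_real_derivative y) (at x) \<and> 0 \<le> y"
        using D by (intro exI[of _ "x ^ (n - 1) * u x powr p / c - K * (real n * x ^ (n - 1))"]) auto
    qed
  qed
  then show ?thesis by (simp add: K_def)
qed

definition K0 where "K0 = (real n * c) powr (- 1 / real k)"

lemma K0pos: "K0 > 0" using npos c by (simp add: K0_def)

lemma wlow: "r > 0 \<Longrightarrow> K0 * r * u r powr (p / real k) \<le> - deriv u r"
proof -
  assume r: "r > 0"
  define ww where "ww = - deriv u r"
  define z where "z = K0 * r * u r powr (p / real k)"
  have ww: "ww > 0" "B r = r ^ (n - k) * ww ^ k" using Bw[OF r] by (auto simp: ww_def)
  have ur: "u r > 0" using upos r by simp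
  have zk: "z ^ k = (1 / (real n * c)) * r ^ k * u r powr p"
  proof -
    have "z ^ k = K0 ^ k * r ^ k * (u r powr (p / real k)) ^ k" by (simp add: z_def power_mult_distrib)
    also have "K0 ^ k = (real n * c) powr (real k * (- 1 / real k))"
      unfolding K0_def using npos c by (subst powr_power) auto
    also have "\<dots> = 1 / (real n * c)" using kpos npos c by (simp add: powr_minus_divide)
    also have "(u r powr (p / real k)) ^ k = u r powr (real k * (p / real k))"
      using ur by (subst powr_power) auto
    also have "\<dots> = u r powr p" using kpos by simp
    finally show ?thesis .
  qed
  have rn: "r ^ n = r ^ (n - k) * r ^ k" using nk by (simp add: power_add[symmetric])
  have "u r powr p * (1 / (real n * c)) * r ^ n \<le> r ^ (n - k) * ww ^ k"
    using Blower[OF r] ww by simp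
  then have "r ^ (n - k) * (z ^ k) \<le> r ^ (n - k) * ww ^ k"
    by (simp add: zk rn mult_ac)
  then have "z ^ k \<le> ww ^ k" using r by simp
  moreover have kk: "k = Suc (k - 1)" using k2 by simp
  ultimately have "z ^ Suc (k - 1) \<le> ww ^ Suc (k - 1)" by (simp only: kk[symmetric])
  then have "z \<le> ww" using power_le_imp_le_base[of z "k - 1" ww] ww(1) by simp
  then show ?thesis by (simp add: z_def ww_def)
qed


definition a where "a = 1 - p / real k"
definition c2 where "c2 = (p / real k - 1) * K0 / 2"
definition beta where "beta = 2 * real k / (p - real k)"
definition Cu where "Cu = c2 powr (1 / a)"

lemma aneg: "a < 0" using pk kpos by (simp add: a_def field_simps)
lemma c2pos: "c2 > 0" using pk kpos K0pos by (simp add: c2_def field_simps)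
lemma Cupos: "Cu > 0" using c2pos by (simp add: Cu_def)
lemma betapos: "beta > 0" using pk kpos by (simp add: beta_def)

lemma vlow: "r > 0 \<Longrightarrow> c2 * r ^ 2 \<le> u r powr a"
proof -
  assume r: "r > 0"
  have lim: "((\<lambda>s. u s powr a - c2 * s ^ 2) \<longlongrightarrow> \<rho> powr a - c2 * 0 ^ 2) (at_right 0)"
    using rho by (intro tendsto_intros ucont) auto
  have "\<rho> powr a - c2 * 0 ^ 2 \<le> u r powr a - c2 * r ^ 2"
  proof (rule lim_le_of_mono[OF r _ lim])
    fix s assume s: "0 < s" "s < r"
    show "u s powr a - c2 * s ^ 2 \<le> u r powr a - c2 * r ^ 2"
    proof (rule DERIV_nonneg_imp_nondecreasing[where f="\<lambda>s. u s powr a - c2 * s ^ 2"])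
      show "s \<le> r" using s by simp
      fix x assume x: "s \<le> x" "x \<le> r"
      then have xp: "x > 0" using s by simp
      have ux: "u x > 0" using upos xp by simp
      have D: "((\<lambda>s. u s powr a - c2 * s ^ 2) has_real_derivative
               (a * u x powr (a - of_nat 1) * deriv u x - c2 * (2 * x))) (at x)"
        by (intro DERIV_diff DERIV_fun_powr uder xp ux) (auto intro!: derivative_eq_intros)
      define ww where "ww = - deriv u x"
      have wl: "K0 * x * u x powr (p / real k) \<le> ww" using wlow[OF xp] by (simp add: ww_def)
      have e1: "a * u x powr (a - of_nat 1) * deriv u x = (p / real k - 1) * u x powr (a - 1) * ww"
        by (simp add: a_def ww_def algebra_simps)
      have "p / real k - 1 \<ge> 0" using pk kpos by (simp add: field_simps)
      then have fpos: "(p / real k - 1) * u x powr (a - 1) \<ge> 0" by simp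
      have "(p / real k - 1) * u x powr (a - 1) * (K0 * x * u x powr (p / real k))
            \<le> (p / real k - 1) * u x powr (a - 1) * ww"
        using wl fpos by (rule mult_left_mono)
      moreover have "u x powr (a - 1) * u x powr (p / real k) = 1"
        using ux by (simp add: powr_add[symmetric] a_def)
      ultimately have "(p / real k - 1) * K0 * x \<le> (p / real k - 1) * u x powr (a - 1) * ww"
        by (simp add: algebra_simps)
      then have "0 \<le> a * u x powr (a - of_nat 1) * deriv u x - c2 * (2 * x)"
        unfolding e1 by (simp add: c2_def)
      then show "\<exists>y. ((\<lambda>s. u s powr a - c2 * s ^ 2) has_real_derivative y) (at x) \<and> 0 \<le> y"
        using D by blast
    qed
  qed
  moreover have "\<rho> powr a - c2 * 0 ^ 2 = \<rho> powr a" by simp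
  moreover have "\<rho> powr a \<ge> 0" by simp
  ultimately show ?thesis by linarith
qed

lemma uup: "r > 0 \<Longrightarrow> u r \<le> Cu * r powr (- beta)"
proof -
  assume r: "r > 0"
  have ur: "u r > 0" using upos r by simp
  have "u r = (u r powr a) powr (1 / a)" using aneg ur by (simp add: powr_powr)
  also have "\<dots> \<le> (c2 * r ^ 2) powr (1 / a)"
    using aneg c2pos r vlow[OF r] by (intro powr_mono2') (auto simp: less_imp_le)
  also have "\<dots> = Cu * (r powr 2) powr (1 / a)"
    using c2pos r by (simp add: powr_mult Cu_def powr_realpow)
  also have "(r powr 2) powr (1 / a) = r powr (- beta)"
  proof -
    have "2 * (1 / a) = - beta" using pk kpos
      by (simp add: a_def beta_def field_simps)
    then show ?thesis by (simp add: powr_powr)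
  qed
  finally show ?thesis .
qed


definition g0 where "g0 = real n - p * beta"
definition KB where "KB = Cu powr p / (c * g0)"

lemma g0pos: "g0 > 0"
proof -
  have "p * (2 * real k) < real n * (p - real k)" using pse by (simp add: algebra_simps)
  then have "p * beta < real n" using pk by (simp add: beta_def field_simps)
  then show ?thesis by (simp add: g0_def)
qed

lemma KBpos: "KB > 0" using Cupos c g0pos by (simp add: KB_def)

lemma Bupper: "r > 0 \<Longrightarrow> B r \<le> KB * r powr g0"
proof -
  assume r: "r > 0"
  have l1: "((\<lambda>s::real. s powr g0) \<longlongrightarrow> 0) (at_right 0)"
    by (rule tendsto_zero_powrI) (auto simp: g0pos eventually_at_right_field intro: tendsto_ident_at exI[of _ 1])
  have lim: "((\<lambda>s. B s - KB * s powr g0) \<longlongrightarrow> 0 - KB * 0) (at_right 0)"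
    by (intro tendsto_intros Blim l1)
  have "B r - KB * r powr g0 \<le> 0 - KB * 0"
  proof (rule lim_ge_of_mono[OF r _ lim])
    fix s assume s: "0 < s" "s < r"
    show "B r - KB * r powr g0 \<le> B s - KB * s powr g0"
    proof (rule DERIV_nonpos_imp_nonincreasing[where f="\<lambda>s. B s - KB * s powr g0"])
      show "s \<le> r" using s by simp
      fix x assume x: "s \<le> x" "x \<le> r"
      then have xp: "x > 0" using s by simp
      have ux: "u x > 0" using upos xp by simp
      have D: "((\<lambda>s. B s - KB * s powr g0) has_real_derivative
               (x ^ (n - 1) * u x powr p / c - KB * (g0 * x powr (g0 - 1)))) (at x)"
        by (intro DERIV_diff Bder xp DERIV_cmult has_real_derivative_powr)
      have "u x powr p \<le> (Cu * x powr (- beta)) powr p"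
        using uup[OF xp] ux ppos by (intro powr_mono2) auto
      also have "\<dots> = Cu powr p * x powr (- beta * p)"
        using Cupos xp by (simp add: powr_mult powr_powr)
      finally have ub: "u x powr p \<le> Cu powr p * x powr (- beta * p)" .
      have xn: "x ^ (n - 1) = x powr (real n - 1)"
        using xp nk by (simp add: powr_realpow[symmetric] of_nat_diff)
      have "x ^ (n - 1) * u x powr p \<le> x ^ (n - 1) * (Cu powr p * x powr (- beta * p))"
        using ub xp by (intro mult_left_mono) auto
      also have "\<dots> = Cu powr p * x powr (g0 - 1)"
        unfolding xn by (simp add: g0_def powr_add[symmetric] algebra_simps)
      finally have "x ^ (n - 1) * u x powr p / c \<le> KB * (g0 * x powr (g0 - 1))"
        using c g0pos by (simp add: KB_def field_simps)
      then show "\<exists>y. ((\<lambda>s. B s - KB * s powr g0) has_real_derivative y) (at x) \<and> y \<le> 0"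
        using D by (intro exI[of _ "x ^ (n - 1) * u x powr p / c - KB * (g0 * x powr (g0 - 1))"]) auto
    qed
  qed
  then show ?thesis by simp
qed

lemma wup: "r > 0 \<Longrightarrow> - deriv u r \<le> KB powr (1 / real k) * r powr ((g0 - real (n - k)) / real k)"
proof -
  assume r: "r > 0"
  define ww where "ww = - deriv u r"
  define z where "z = KB powr (1 / real k) * r powr ((g0 - real (n - k)) / real k)"
  have ww: "ww > 0" "B r = r ^ (n - k) * ww ^ k" using Bw[OF r] by (auto simp: ww_def)
  have zk: "z ^ k = KB * r powr (g0 - real (n - k))"
  proof -
    have "z ^ k = (KB powr (1 / real k)) ^ k * (r powr ((g0 - real (n - k)) / real k)) ^ k"
      by (simp add: z_def power_mult_distrib)
    also have "\<dots> = KB powr (real k * (1 / real k)) * r powr (real k * ((g0 - real (n - k)) / real k))"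
      using KBpos r by (simp add: powr_power)
    also have "\<dots> = KB * r powr (g0 - real (n - k))" using kpos KBpos by simp
    finally show ?thesis .
  qed
  have rnk: "r ^ (n - k) = r powr real (n - k)" using r by (simp add: powr_realpow)
  have "r ^ (n - k) * ww ^ k \<le> KB * r powr g0" using Bupper[OF r] ww by simp
  also have "KB * r powr g0 = r ^ (n - k) * z ^ k"
    unfolding zk rnk using r by (simp add: powr_add[symmetric])
  finally have "ww ^ k \<le> z ^ k" using r by simp
  moreover have kk: "k = Suc (k - 1)" using k2 by simp
  ultimately have "ww ^ Suc (k - 1) \<le> z ^ Suc (k - 1)" by (simp only: kk[symmetric])
  moreover have "z \<ge> 0" using KBpos by (simp add: z_def)
  ultimately have "ww \<le> z" using power_le_imp_le_base[of ww "k - 1" z] by simp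
  then show ?thesis by (simp add: z_def ww_def)
qed


definition W where "W s = exp ((ln (B s) - real (n - k) * ln s) / real k)"

lemma Weq: "r > 0 \<Longrightarrow> W r = - deriv u r"
proof -
  assume r: "r > 0"
  define ww where "ww = - deriv u r"
  have ww: "ww > 0" "B r = r ^ (n - k) * ww ^ k" using Bw[OF r] by (auto simp: ww_def)
  have "ln (B r) = real (n - k) * ln r + real k * ln ww"
    using ww r by (simp add: ln_mult ln_realpow)
  then have "(ln (B r) - real (n - k) * ln r) / real k = ln ww" using kpos by simp
  then show ?thesis using ww by (simp add: W_def ww_def)
qed

lemma Wder: "r > 0 \<Longrightarrow> (W has_real_derivative
   W r * (((r ^ (n - 1) * u r powr p / c) / B r - real (n - k) / r) / real k)) (at r)"
proof -
  assume r: "r > 0"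
  have Br: "B r > 0" using Bpos[OF r] .
  have "((\<lambda>s. (ln (B s) - real (n - k) * ln s) / real k) has_real_derivative
     (((r ^ (n - 1) * u r powr p / c) / B r - real (n - k) / r) / real k)) (at r)"
    using r Br kpos by (auto intro!: derivative_eq_intros Bder[OF r] simp: field_simps)
  from DERIV_fun_exp[OF this] show ?thesis unfolding W_def[abs_def] by simp
qed

definition alpha where "alpha = real k * c / (real k + 1)"
definition gam where "gam = c * (real n - 2 * real k) / (real k + 1)"
definition delta where "delta = real n / (p + 1) - (real n - 2 * real k) / (real k + 1)"
definition P where "P s = alpha * s * B s * W s + s ^ n * u s powr (p + 1) / (p + 1) - gam * B s * u s"

lemma Pder: "r > 0 \<Longrightarrow> (P has_real_derivative delta * r ^ (n - 1) * (u r * u r powr p)) (at r)"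
proof -
  assume r: "r > 0"
  have ur: "u r > 0" using upos r by simp
  define Bp where "Bp = r ^ (n - 1) * u r powr p / c"
  define Wp where "Wp = W r * (((r ^ (n - 1) * u r powr p / c) / B r - real (n - k) / r) / real k)"
  have dB: "(B has_real_derivative Bp) (at r)" using Bder[OF r] by (simp add: Bp_def)
  have dW: "(W has_real_derivative Wp) (at r)" using Wder[OF r] by (simp add: Wp_def)
  have dU: "((\<lambda>s. u s powr (p + 1)) has_real_derivative (p + 1) * u r powr p * deriv u r) (at r)"
    using DERIV_fun_powr[OF uder[OF r] ur, of "p + 1"] by simp
  have d1: "((\<lambda>s. alpha * s * B s * W s) has_real_derivative
       alpha * (B r * W r + r * Bp * W r + r * B r * Wp)) (at r)"
    by (auto intro!: derivative_eq_intros dB dW simp: algebra_simps)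
  have d2: "((\<lambda>s. s ^ n * u s powr (p + 1) / (p + 1)) has_real_derivative
       (real n * r ^ (n - 1) * u r powr (p + 1) + r ^ n * ((p + 1) * u r powr p * deriv u r)) / (p + 1)) (at r)"
  proof -
    have "((\<lambda>s. s ^ n) has_real_derivative real n * r ^ (n - 1)) (at r)"
      by (auto intro!: derivative_eq_intros)
    from DERIV_cdivide[OF DERIV_mult[OF this dU], of "p + 1"] show ?thesis
      by (rule DERIV_cong) (simp add: algebra_simps)
  qed
  have d3: "((\<lambda>s. gam * B s * u s) has_real_derivative gam * (Bp * u r + B r * deriv u r)) (at r)"
    by (auto intro!: derivative_eq_intros dB uder[OF r] simp: algebra_simps)
  have D: "(P has_real_derivative alpha * (B r * W r + r * Bp * W r + r * B r * Wp)
      + (real n * r ^ (n - 1) * u r powr (p + 1) + r ^ n * ((p + 1) * u r powr p * deriv u r)) / (p + 1)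
      - gam * (Bp * u r + B r * deriv u r)) (at r)"
    unfolding P_def[abs_def] by (intro DERIV_diff DERIV_add d1 d2 d3)
  have Wr: "W r = - deriv u r" using Weq[OF r] .
  have rn: "r ^ n = r * r ^ (n - 1)" using nk by (cases n) auto
  have up1: "u r powr (p + 1) = u r * u r powr p" using ur by (simp add: powr_add)
  have nk': "real (n - k) = real n - real k" using nk by simp
  have Br: "B r > 0" using Bpos[OF r] .
  have A: "real k * c / (real k + 1) * (B r * (- deriv u r) + r * (r ^ (n - 1) * u r powr p / c) * (- deriv u r)
      + r * B r * ((- deriv u r) * ((r ^ (n - 1) * u r powr p / c / B r - (real n - real k) / r) / real k)))
    + (real n * r ^ (n - 1) * (u r * u r powr p) + r * r ^ (n - 1) * ((p + 1) * u r powr p * (- (- deriv u r)))) / (p + 1)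
    - c * (real n - 2 * real k) / (real k + 1) * (r ^ (n - 1) * u r powr p / c * u r + B r * (- (- deriv u r)))
    = (real n / (p + 1) - (real n - 2 * real k) / (real k + 1)) * r ^ (n - 1) * (u r * u r powr p)"
    using alg[of r "B r" c "real k" p "- deriv u r" "r ^ (n - 1)" "u r powr p" "real n" "u r"] r Br c kpos ppos
    by (simp add: mult.assoc)
  show ?thesis
  proof (rule DERIV_cong[OF D])
    show "alpha * (B r * W r + r * Bp * W r + r * B r * Wp)
      + (real n * r ^ (n - 1) * u r powr (p + 1) + r ^ n * ((p + 1) * u r powr p * deriv u r)) / (p + 1)
      - gam * (Bp * u r + B r * deriv u r) = delta * r ^ (n - 1) * (u r * u r powr p)"
      unfolding Wp_def Bp_def Wr up1 rn nk' alpha_def gam_def delta_def using A by simp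
  qed
qed


lemma deltapos: "delta > 0"
proof -
  have "(real n - 2 * real k) * (p + 1) < real n * (real k + 1)"
    using pso by (simp add: algebra_simps)
  then have "(real n - 2 * real k) / (real k + 1) < real n / (p + 1)"
    using ppos kpos by (simp add: field_simps)
  then show ?thesis by (simp add: delta_def)
qed

lemma Pmono: "0 < s \<Longrightarrow> s < r \<Longrightarrow> P s < P r"
proof (rule DERIV_pos_imp_increasing[where f=P])
  fix x assume "0 < s" "s \<le> x"
  then have x: "x > 0" by simp
  then have "delta * x ^ (n - 1) * (u x * u x powr p) > 0" using deltapos upos[OF x] by simp
  then show "\<exists>y. (P has_real_derivative y) (at x) \<and> 0 < y" using Pder[OF x] by blast
qed

lemma gampos: "gam > 0" using c nk_real kpos by (simp add: gam_def)
lemma alphapos: "alpha > 0" using c kpos by (simp add: alpha_def)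

lemma Plow: "s > 0 \<Longrightarrow> - gam * \<rho> * B s \<le> P s"
proof -
  assume s: "s > 0"
  have "alpha * s * B s * W s \<ge> 0" using alphapos s Bpos[OF s] by (simp add: W_def)
  moreover have "s ^ n * u s powr (p + 1) / (p + 1) \<ge> 0" using s ppos by simp
  moreover have "gam * B s * u s \<le> gam * B s * \<rho>"
    using gampos Bpos[OF s] ule[OF s] by simp
  ultimately show ?thesis unfolding P_def by (simp add: algebra_simps)
qed

lemma Pnonneg: "r > 0 \<Longrightarrow> P r \<ge> 0"
proof -
  assume r: "r > 0"
  have lim: "((\<lambda>s. - gam * \<rho> * B s) \<longlongrightarrow> - gam * \<rho> * 0) (at_right 0)"
    by (intro tendsto_intros Blim)
  have ev: "\<forall>\<^sub>F s in at_right 0. - gam * \<rho> * B s \<le> P r"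
    unfolding eventually_at_right_field
  proof (intro exI[of _ r] conjI allI impI)
    fix y :: real assume y: "0 < y" "y < r"
    have "- gam * \<rho> * B y \<le> P y" using Plow[OF y(1)] .
    moreover have "P y < P r" using Pmono[OF y] .
    ultimately show "- gam * \<rho> * B y \<le> P r" by simp
  qed (use r in simp)
  have "- gam * \<rho> * 0 \<le> P r"
    by (rule tendsto_le[OF _ tendsto_const lim ev]) simp
  then show ?thesis by simp
qed

definition e1 where "e1 = 1 + g0 + (g0 - real (n - k)) / real k"
definition e2 where "e2 = real n - beta * (p + 1)"
definition C1 where "C1 = alpha * KB * KB powr (1 / real k)"
definition C2 where "C2 = Cu powr (p + 1) / (p + 1)"

lemma e2neg: "e2 < 0"
proof -
  have "real n * (p - real k) < 2 * real k * (p + 1)" using pso by (simp add: algebra_simps)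
  then have "real n < beta * (p + 1)" using pk by (simp add: beta_def field_simps)
  then show ?thesis by (simp add: e2_def)
qed

lemma e1neg: "e1 < 0"
proof -
  have nk': "real (n - k) = real n - real k" using nk by simp
  have "e1 = real n + 2 - p * beta * (real k + 1) / real k"
    using kpos by (simp add: e1_def g0_def nk' field_simps)
  also have "p * beta * (real k + 1) / real k = 2 * p * (real k + 1) / (p - real k)"
    using kpos pk by (simp add: beta_def field_simps)
  also have "real n + 2 - 2 * p * (real k + 1) / (p - real k) < 0"
  proof -
    have "(real n + 2) * (p - real k) < 2 * p * (real k + 1)" using pso by (simp add: algebra_simps)
    then show ?thesis using pk by (simp add: field_simps)
  qed
  finally show ?thesis .
qed

lemma Pupper: "R > 0 \<Longrightarrow> P R \<le> C1 * R powr e1 + C2 * R powr e2"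
proof -
  assume R: "R > 0"
  have uR: "u R > 0" using upos R by simp
  have BR: "B R > 0" using Bpos[OF R] .
  have t3: "gam * B R * u R \<ge> 0" using gampos BR uR by simp
  have W1: "W R \<le> KB powr (1 / real k) * R powr ((g0 - real (n - k)) / real k)"
    using wup[OF R] Weq[OF R] by simp
  have W0: "W R \<ge> 0" by (simp add: W_def)
  have "alpha * R * B R * W R \<le> alpha * R * (KB * R powr g0) * (KB powr (1 / real k) * R powr ((g0 - real (n - k)) / real k))"
    using alphapos R BR W0 W1 Bupper[OF R] by (intro mult_mono mult_left_mono) auto
  also have "\<dots> = C1 * (R * R powr g0 * R powr ((g0 - real (n - k)) / real k))"
    using R by (simp add: C1_def)
  also have "\<dots> = C1 * R powr e1" using R by (simp add: e1_def powr_add mult.assoc)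
  finally have T1: "alpha * R * B R * W R \<le> C1 * R powr e1" .
  have "u R powr (p + 1) \<le> (Cu * R powr (- beta)) powr (p + 1)"
    using uup[OF R] uR ppos by (intro powr_mono2) auto
  also have "\<dots> = Cu powr (p + 1) * R powr (- beta * (p + 1))"
    using Cupos R by (simp add: powr_mult powr_powr)
  finally have ub: "u R powr (p + 1) \<le> Cu powr (p + 1) * R powr (- beta * (p + 1))" .
  have "R ^ n * u R powr (p + 1) / (p + 1) \<le> R ^ n * (Cu powr (p + 1) * R powr (- beta * (p + 1))) / (p + 1)"
    using ub R ppos by (intro divide_right_mono mult_left_mono) auto
  also have "\<dots> = C2 * (R powr real n * R powr (- beta * (p + 1)))"
    using R by (simp add: C2_def powr_realpow)
  also have "\<dots> = C2 * R powr e2" by (simp add: e2_def powr_add[symmetric])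
  finally have T2: "R ^ n * u R powr (p + 1) / (p + 1) \<le> C2 * R powr e2" .
  show ?thesis using T1 T2 t3 unfolding P_def by linarith
qed

lemma contradiction: False
proof -
  have P1: "P 1 \<ge> 0" using Pnonneg by simp
  have P2: "P 2 > 0" using Pmono[of 1 2] P1 by simp
  have lim: "((\<lambda>R. C1 * R powr e1 + C2 * R powr e2) \<longlongrightarrow> C1 * 0 + C2 * 0) at_top"
    by (intro tendsto_intros tendsto_neg_powr e1neg e2neg filterlim_ident)
  then have "\<forall>\<^sub>F R in at_top. C1 * R powr e1 + C2 * R powr e2 < P 2"
    using P2 by (intro order_tendstoD(2)) auto
  moreover have "\<forall>\<^sub>F R in at_top. (R::real) > 2" by (rule eventually_gt_at_top)
  ultimately have "\<forall>\<^sub>F R in at_top. C1 * R powr e1 + C2 * R powr e2 < P 2 \<and> R > 2"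
    by (rule eventually_conj)
  then obtain R where R: "C1 * R powr e1 + C2 * R powr e2 < P 2" "R > 2"
    using eventually_happens[of _ "at_top::real filter"] by auto
  have "P 2 < P R" using Pmono[of 2 R] R by simp
  moreover have "P R \<le> C1 * R powr e1 + C2 * R powr e2" using Pupper R by simp
  ultimately show False using R by simp
qed

end

theorem theorem1p1:
  fixes n k :: nat and p \<rho> :: real and u :: "real \<Rightarrow> real"
  assumes "CARD('n::finite) = n"
    and "n \<ge> 3" and "1 < k" and "real k < real n / 2"
    and "real n * real k / (real n - 2 * real k) < p"
    and "p < (real n + 2) * real k / (real n - 2 * real k)"
    and "\<rho> > 0"
  shows "\<not> regular_solution_1_6 TYPE('n) n k p \<rho> u"
proof
  assume "regular_solution_1_6 TYPE('n) n k p \<rho> u"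
  then have S: "solves_problem_1_6 n k p \<rho> u" by (simp add: regular_solution_1_6_def)
  define c where "c = (1 / real k) * real ((n - 1) choose (k - 1))"
  define B where "B = (\<lambda>s. - (s ^ (n - k) * \<bar>deriv u s\<bar> ^ (k - 1) * deriv u s))"
  have nk: "2 * k < n" using assms(4) by linarith
  have den: "real n - 2 * real k > 0" using nk by linarith
  have "sol n k p \<rho> c u B"
  proof
    show "2 \<le> k" using assms(3) by simp
    show "2 * k < n" by fact
    show "real n * real k < p * (real n - 2 * real k)" using assms(5) den by (simp add: field_simps)
    show "p * (real n - 2 * real k) < (real n + 2) * real k" using assms(6) den by (simp add: field_simps)
    show "\<rho> > 0" by fact
    have "k - 1 \<le> n - 1" using nk by simp
    then have "(n - 1) choose (k - 1) > 0" by simp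
    then show "c > 0" using assms(3) by (simp add: c_def)
    show "\<And>r. r > 0 \<Longrightarrow> u r > 0" "u 0 = \<rho>" "(u has_real_derivative 0) (at 0 within {0..})"
      "\<And>r. r > 0 \<Longrightarrow> u differentiable (at r)"
      using S by (auto simp: solves_problem_1_6_def)
    show "B = (\<lambda>s. - (s ^ (n - k) * \<bar>deriv u s\<bar> ^ (k - 1) * deriv u s))" by (simp add: B_def)
    fix r :: real assume r: "r > 0"
    then obtain D where D: "((\<lambda>s. s ^ (n - k) * \<bar>deriv u s\<bar> ^ (k - 1) * deriv u s) has_real_derivative D) (at r)"
      "- (1 / real k) * real ((n - 1) choose (k - 1)) * D = r ^ (n - 1) * u r powr p"
      using S by (auto simp: solves_problem_1_6_def)
    have "(B has_real_derivative - D) (at r)" unfolding B_def using DERIV_minus[OF D(1)] .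
    moreover have "c * (- D) = r ^ (n - 1) * u r powr p" using D(2) by (simp add: c_def)
    ultimately show "\<exists>D. (B has_real_derivative D) (at r) \<and> c * D = r ^ (n - 1) * u r powr p" by blast
  qed
  then show False by (rule sol.contradiction)
qed

end
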